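(* Let $T=(\{T_g\}_{g\in G},\{\gamma_{g,h}\}_{g,h\in G},u)$ and $T'=(\{T'_g\}_{g\in G},\{\gamma'_{g,h}\}_{g,h\in G},u')$ be partial actions of a group $G$ on semigroupal categories $\mathcal{C}$ and $\mathcal{C}'$ respectively, and let $(F,\{\tau_g\}_{g\in G})\colon T\to T'$ be a morphism of partial actions. Then for every object $X$ of $\mathcal{C}$, $$(\tau_e)_X\circ F(u_X)=u'_{F(X)}.$$
   Context: Semigroupal categories are (strict) categories with a tensor functor and associator satisfying the pentagon axiom; an ideal is a subcategory closed under isomorphisms and under tensoring on either side by arbitrary objects. A partial action of $G$ (unit $e$) on a semigroupal category $\mathcal{C}$ is a triple $(\{T_g\},\{\gamma_{g,h}\},u)$ together with ideals $\mathcal{C}_g$ of $\mathcal{C}$ such that: (1) $(T_g,J^g)\colon\mathcal{C}_{g^{-1}}\to\mathcal{C}_g$ is a semigroupal equivalence ($J^g\colon T_g(-)\otimes T_g(-)\Rightarrow T_g(-\otimes-)$ a natural isomorphism satisfying the hexagon axiom); (2) $\mathcal{C}_e=\mathcal{C}$ and $u\colon\mathrm{Id}_{\mathcal{C}}\Rightarrow T_e$ is a natural isomorphism of semigroupal functors, i.e. $J^e_{X,Y}\circ(u_X\otimes u_Y)=u_{X\otimes Y}$; (3) the restriction of $T_g$ to $\mathcal{C}_{g^{-1}}\cap\mathcal{C}_h$ is a semigroupal equivalence onto $\mathcal{C}_g\cap\mathcal{C}_{gh}$; (4) $\gamma_{g,h}\colon T_gT_h\Rightarrow T_{gh}$ is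 a natural isomorphism of functors $\mathcal{C}_{h^{-1}}\cap\mathcal{C}_{h^{-1}g^{-1}}\to\mathcal{C}_g\cap\mathcal{C}_{gh}$ with $J^{gh}_{X,Y}\circ((\gamma_{g,h})_X\otimes(\gamma_{g,h})_Y)=(\gamma_{g,h})_{X\otimes Y}\circ T_g(J^h_{X,Y})\circ J^g_{T_h(X),T_h(Y)}$; and moreover $(\gamma_{gh,k})_X\circ(\gamma_{g,h})_{T_k(X)}=(\gamma_{g,hk})_X\circ T_g((\gamma_{h,k})_X)$ for $X\in\mathcal{C}_{k^{-1}}\cap\mathcal{C}_{k^{-1}h^{-1}}\cap\mathcal{C}_{k^{-1}h^{-1}g^{-1}}$, and for $X\in\mathcal{C}_{g^{-1}}$ the morphisms $u_{T_g(X)}$ and $(\gamma_{e,g})_X$ are mutually inverse, as are $T_g(u_X)$ and $(\gamma_{g,e})_X$. A morphism of partial actions $(F,\{\tau_g\})\colon T\to T'$ consists of a semigroupal functor $F\colon\mathcal{C}\to\mathcal{C}'$ and, for each $g\in G$, a natural isomorphism $\tau_g\colon FT_g\Rightarrow T'_gF$ of functors from $\mathcal{C}_{g^{-1}}$ to $\mathcal{C}'_g$, such that $(\tau_{gh})_X\circ F((\gamma_{g,h})_X)=(\gamma'_{g,h})_{F(X)}\circ T'_g((\tau_h)_X)\circ(\tau_g)_{T_h(X)}$ for all $X\in\mathcal{C}_{h^{-1}}\cap\mathcal{C}_{(gh)^{-1}}$. *)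

theory Defs
  imports "HOL-Algebra.Group"
begin

text \<open>Cmp C g f is the composite g after f (defined when the codomain of f is the
domain of g). TnO / TnA are the tensor product on objects / arrows, Asc X Y Z is the
associator (X (x) Y) (x) Z -> X (x) (Y (x) Z).\<close>

record ('o,'m) scat =
  Ob  :: "'o set"
  Ar  :: "'m set"
  Dm  :: "'m \<Rightarrow> 'o"
  Cd  :: "'m \<Rightarrow> 'o"
  Idt :: "'o \<Rightarrow> 'm"
  Cmp :: "'m \<Rightarrow> 'm \<Rightarrow> 'm"
  TnO :: "'o \<Rightarrow> 'o \<Rightarrow> 'o"
  TnA :: "'m \<Rightarrow> 'm \<Rightarrow> 'm"
  Asc :: "'o \<Rightarrow> 'o \<Rightarrow> 'o \<Rightarrow> 'm"

definition homs :: "('o,'m) scat \<Rightarrow> 'o \<Rightarrow> 'o \<Rightarrow> 'm set" where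
  "homs C X Y = {f \<in> Ar C. Dm C f = X \<and> Cd C f = Y}"

definition inverse_arr :: "('o,'m) scat \<Rightarrow> 'm \<Rightarrow> 'm \<Rightarrow> bool" where
  "inverse_arr C f g \<longleftrightarrow> f \<in> Ar C \<and> g \<in> Ar C \<and> Dm C g = Cd C f \<and> Cd C g = Dm C f
     \<and> Cmp C g f = Idt C (Dm C f) \<and> Cmp C f g = Idt C (Cd C f)"

definition iso_arr :: "('o,'m) scat \<Rightarrow> 'm \<Rightarrow> bool" where
  "iso_arr C f \<longleftrightarrow> (\<exists>g. inverse_arr C f g)"

definition category :: "('o,'m) scat \<Rightarrow> bool" where
  "category C \<longleftrightarrow>
     (\<forall>f\<in>Ar C. Dm C f \<in> Ob C \<and> Cd C f \<in> Ob C) \<and>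
     (\<forall>X\<in>Ob C. Idt C X \<in> homs C X X) \<and>
     (\<forall>f\<in>Ar C. \<forall>g\<in>Ar C. Cd C f = Dm C g \<longrightarrow> Cmp C g f \<in> homs C (Dm C f) (Cd C g)) \<and>
     (\<forall>f\<in>Ar C. Cmp C f (Idt C (Dm C f)) = f \<and> Cmp C (Idt C (Cd C f)) f = f) \<and>
     (\<forall>f\<in>Ar C. \<forall>g\<in>Ar C. \<forall>h\<in>Ar C. Cd C f = Dm C g \<longrightarrow> Cd C g = Dm C h \<longrightarrow>
        Cmp C h (Cmp C g f) = Cmp C (Cmp C h g) f)"

definition semigroupal_cat :: "('o,'m) scat \<Rightarrow> bool" where
  "semigroupal_cat C \<longleftrightarrow> category C \<and>
     (\<forall>X\<in>Ob C. \<forall>Y\<in>Ob C. TnO C X Y \<in> Ob C) \<and>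
     (\<forall>f\<in>Ar C. \<forall>g\<in>Ar C.
        TnA C f g \<in> homs C (TnO C (Dm C f) (Dm C g)) (TnO C (Cd C f) (Cd C g))) \<and>
     (\<forall>X\<in>Ob C. \<forall>Y\<in>Ob C. TnA C (Idt C X) (Idt C Y) = Idt C (TnO C X Y)) \<and>
     (\<forall>f\<in>Ar C. \<forall>g\<in>Ar C. \<forall>f'\<in>Ar C. \<forall>g'\<in>Ar C.
        Cd C f = Dm C g \<longrightarrow> Cd C f' = Dm C g' \<longrightarrow>
        TnA C (Cmp C g f) (Cmp C g' f') = Cmp C (TnA C g g') (TnA C f f')) \<and>
     (\<forall>X\<in>Ob C. \<forall>Y\<in>Ob C. \<forall>Z\<in>Ob C.
        Asc C X Y Z \<in> homs C (TnO C (TnO C X Y) Z) (TnO C X (TnO C Y Z)) \<and>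
        iso_arr C (Asc C X Y Z)) \<and>
     (\<forall>f\<in>Ar C. \<forall>g\<in>Ar C. \<forall>h\<in>Ar C.
        Cmp C (Asc C (Cd C f) (Cd C g) (Cd C h)) (TnA C (TnA C f g) h) =
        Cmp C (TnA C f (TnA C g h)) (Asc C (Dm C f) (Dm C g) (Dm C h))) \<and>
     (\<forall>W\<in>Ob C. \<forall>X\<in>Ob C. \<forall>Y\<in>Ob C. \<forall>Z\<in>Ob C.
        Cmp C (Asc C W X (TnO C Y Z)) (Asc C (TnO C W X) Y Z) =
        Cmp C (TnA C (Idt C W) (Asc C X Y Z))
          (Cmp C (Asc C W (TnO C X Y) Z) (TnA C (Asc C W X Y) (Idt C Z))))"

text \<open>An ideal: a (full) subcategory, given by its set of objects, closed under
isomorphisms and under tensoring on either side by arbitrary objects.\<close>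

definition sg_ideal :: "('o,'m) scat \<Rightarrow> 'o set \<Rightarrow> bool" where
  "sg_ideal C I \<longleftrightarrow> I \<subseteq> Ob C \<and>
     (\<forall>X\<in>I. \<forall>Y\<in>Ob C. TnO C X Y \<in> I \<and> TnO C Y X \<in> I) \<and>
     (\<forall>f. iso_arr C f \<longrightarrow> Dm C f \<in> I \<longrightarrow> Cd C f \<in> I)"

definition arrs_on :: "('o,'m) scat \<Rightarrow> 'o set \<Rightarrow> 'm set" where
  "arrs_on C A = {f \<in> Ar C. Dm C f \<in> A \<and> Cd C f \<in> A}"

definition functor_on ::
  "('o,'m) scat \<Rightarrow> 'o set \<Rightarrow> ('p,'n) scat \<Rightarrow> 'p set \<Rightarrow> ('o \<Rightarrow> 'p) \<Rightarrow> ('m \<Rightarrow> 'n) \<Rightarrow> bool" where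
  "functor_on C A D B Fo Fm \<longleftrightarrow>
     (\<forall>X\<in>A. Fo X \<in> B) \<and>
     (\<forall>f\<in>arrs_on C A. Fm f \<in> homs D (Fo (Dm C f)) (Fo (Cd C f))) \<and>
     (\<forall>X\<in>A. Fm (Idt C X) = Idt D (Fo X)) \<and>
     (\<forall>f\<in>arrs_on C A. \<forall>g\<in>arrs_on C A. Cd C f = Dm C g \<longrightarrow>
        Fm (Cmp C g f) = Cmp D (Fm g) (Fm f))"

definition equivalence_on ::
  "('o,'m) scat \<Rightarrow> 'o set \<Rightarrow> ('p,'n) scat \<Rightarrow> 'p set \<Rightarrow> ('o \<Rightarrow> 'p) \<Rightarrow> ('m \<Rightarrow> 'n) \<Rightarrow> bool" where
  "equivalence_on C A D B Fo Fm \<longleftrightarrow> functor_on C A D B Fo Fm \<and>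
     (\<forall>X\<in>A. \<forall>Y\<in>A. \<forall>h\<in>homs D (Fo X) (Fo Y). \<exists>f\<in>homs C X Y. Fm f = h) \<and>
     (\<forall>X\<in>A. \<forall>Y\<in>A. \<forall>f\<in>homs C X Y. \<forall>g\<in>homs C X Y. Fm f = Fm g \<longrightarrow> f = g) \<and>
     (\<forall>Y\<in>B. \<exists>X\<in>A. \<exists>h. h \<in> homs D (Fo X) Y \<and> iso_arr D h)"

definition semigroupal_functor_on ::
  "('o,'m) scat \<Rightarrow> 'o set \<Rightarrow> ('p,'n) scat \<Rightarrow> 'p set \<Rightarrow> ('o \<Rightarrow> 'p) \<Rightarrow> ('m \<Rightarrow> 'n)
     \<Rightarrow> ('o \<Rightarrow> 'o \<Rightarrow> 'n) \<Rightarrow> bool" where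
  "semigroupal_functor_on C A D B Fo Fm J \<longleftrightarrow> functor_on C A D B Fo Fm \<and>
     (\<forall>X\<in>A. \<forall>Y\<in>A. J X Y \<in> homs D (TnO D (Fo X) (Fo Y)) (Fo (TnO C X Y)) \<and>
        iso_arr D (J X Y)) \<and>
     (\<forall>f\<in>arrs_on C A. \<forall>g\<in>arrs_on C A.
        Cmp D (J (Cd C f) (Cd C g)) (TnA D (Fm f) (Fm g)) =
        Cmp D (Fm (TnA C f g)) (J (Dm C f) (Dm C g))) \<and>
     (\<forall>X\<in>A. \<forall>Y\<in>A. \<forall>Z\<in>A.
        Cmp D (Fm (Asc C X Y Z))
          (Cmp D (J (TnO C X Y) Z) (TnA D (J X Y) (Idt D (Fo Z)))) =
        Cmp D (J X (TnO C Y Z))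
          (Cmp D (TnA D (Idt D (Fo X)) (J Y Z)) (Asc D (Fo X) (Fo Y) (Fo Z))))"

definition semigroupal_equiv_on ::
  "('o,'m) scat \<Rightarrow> 'o set \<Rightarrow> ('p,'n) scat \<Rightarrow> 'p set \<Rightarrow> ('o \<Rightarrow> 'p) \<Rightarrow> ('m \<Rightarrow> 'n)
     \<Rightarrow> ('o \<Rightarrow> 'o \<Rightarrow> 'n) \<Rightarrow> bool" where
  "semigroupal_equiv_on C A D B Fo Fm J \<longleftrightarrow>
     semigroupal_functor_on C A D B Fo Fm J \<and> equivalence_on C A D B Fo Fm"

definition nat_trans_on ::
  "('o,'m) scat \<Rightarrow> 'o set \<Rightarrow> ('p,'n) scat \<Rightarrow> ('o \<Rightarrow> 'p) \<Rightarrow> ('m \<Rightarrow> 'n)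
     \<Rightarrow> ('o \<Rightarrow> 'p) \<Rightarrow> ('m \<Rightarrow> 'n) \<Rightarrow> ('o \<Rightarrow> 'n) \<Rightarrow> bool" where
  "nat_trans_on C A D Fo Fm Go Gm \<sigma> \<longleftrightarrow>
     (\<forall>X\<in>A. \<sigma> X \<in> homs D (Fo X) (Go X)) \<and>
     (\<forall>f\<in>arrs_on C A. Cmp D (\<sigma> (Cd C f)) (Fm f) = Cmp D (Gm f) (\<sigma> (Dm C f)))"

definition nat_iso_on ::
  "('o,'m) scat \<Rightarrow> 'o set \<Rightarrow> ('p,'n) scat \<Rightarrow> ('o \<Rightarrow> 'p) \<Rightarrow> ('m \<Rightarrow> 'n)
     \<Rightarrow> ('o \<Rightarrow> 'p) \<Rightarrow> ('m \<Rightarrow> 'n) \<Rightarrow> ('o \<Rightarrow> 'n) \<Rightarrow> bool" where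
  "nat_iso_on C A D Fo Fm Go Gm \<sigma> \<longleftrightarrow>
     nat_trans_on C A D Fo Fm Go Gm \<sigma> \<and> (\<forall>X\<in>A. iso_arr D (\<sigma> X))"

record ('g,'o,'m) pact =
  Tob :: "'g \<Rightarrow> 'o \<Rightarrow> 'o"
  Tar :: "'g \<Rightarrow> 'm \<Rightarrow> 'm"
  TJ  :: "'g \<Rightarrow> 'o \<Rightarrow> 'o \<Rightarrow> 'm"
  Gam :: "'g \<Rightarrow> 'g \<Rightarrow> 'o \<Rightarrow> 'm"
  Unt :: "'o \<Rightarrow> 'm"
  Dom_id :: "'g \<Rightarrow> 'o set"

definition partial_action :: "'g monoid \<Rightarrow> ('o,'m) scat \<Rightarrow> ('g,'o,'m) pact \<Rightarrow> bool" where
  "partial_action G C T \<longleftrightarrow> group G \<and> semigroupal_cat C \<and>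
     (\<forall>g\<in>carrier G. sg_ideal C (Dom_id T g)) \<and>
     \<comment> \<open>(1)\<close>
     (\<forall>g\<in>carrier G. semigroupal_equiv_on C (Dom_id T (inv\<^bsub>G\<^esub> g)) C (Dom_id T g)
        (Tob T g) (Tar T g) (TJ T g)) \<and>
     \<comment> \<open>(2)\<close>
     Dom_id T \<one>\<^bsub>G\<^esub> = Ob C \<and>
     nat_iso_on C (Ob C) C id id (Tob T \<one>\<^bsub>G\<^esub>) (Tar T \<one>\<^bsub>G\<^esub>) (Unt T) \<and>
     (\<forall>X\<in>Ob C. \<forall>Y\<in>Ob C.
        Cmp C (TJ T \<one>\<^bsub>G\<^esub> X Y) (TnA C (Unt T X) (Unt T Y)) = Unt T (TnO C X Y)) \<and>
     \<comment> \<open>(3)\<close>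
     (\<forall>g\<in>carrier G. \<forall>h\<in>carrier G.
        semigroupal_equiv_on C (Dom_id T (inv\<^bsub>G\<^esub> g) \<inter> Dom_id T h)
          C (Dom_id T g \<inter> Dom_id T (g \<otimes>\<^bsub>G\<^esub> h)) (Tob T g) (Tar T g) (TJ T g)) \<and>
     \<comment> \<open>(4)\<close>
     (\<forall>g\<in>carrier G. \<forall>h\<in>carrier G.
        nat_iso_on C (Dom_id T (inv\<^bsub>G\<^esub> h) \<inter> Dom_id T (inv\<^bsub>G\<^esub> h \<otimes>\<^bsub>G\<^esub> inv\<^bsub>G\<^esub> g)) C
          (Tob T g \<circ> Tob T h) (Tar T g \<circ> Tar T h)
          (Tob T (g \<otimes>\<^bsub>G\<^esub> h)) (Tar T (g \<otimes>\<^bsub>G\<^esub> h)) (Gam T g h) \<and>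
        (\<forall>X\<in>Dom_id T (inv\<^bsub>G\<^esub> h) \<inter> Dom_id T (inv\<^bsub>G\<^esub> h \<otimes>\<^bsub>G\<^esub> inv\<^bsub>G\<^esub> g).
         \<forall>Y\<in>Dom_id T (inv\<^bsub>G\<^esub> h) \<inter> Dom_id T (inv\<^bsub>G\<^esub> h \<otimes>\<^bsub>G\<^esub> inv\<^bsub>G\<^esub> g).
           Cmp C (TJ T (g \<otimes>\<^bsub>G\<^esub> h) X Y) (TnA C (Gam T g h X) (Gam T g h Y)) =
           Cmp C (Gam T g h (TnO C X Y))
             (Cmp C (Tar T g (TJ T h X Y)) (TJ T g (Tob T h X) (Tob T h Y))))) \<and>
     (\<forall>g\<in>carrier G. \<forall>h\<in>carrier G. \<forall>k\<in>carrier G.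
        \<forall>X\<in>Dom_id T (inv\<^bsub>G\<^esub> k) \<inter> Dom_id T (inv\<^bsub>G\<^esub> k \<otimes>\<^bsub>G\<^esub> inv\<^bsub>G\<^esub> h)
             \<inter> Dom_id T (inv\<^bsub>G\<^esub> k \<otimes>\<^bsub>G\<^esub> inv\<^bsub>G\<^esub> h \<otimes>\<^bsub>G\<^esub> inv\<^bsub>G\<^esub> g).
          Cmp C (Gam T (g \<otimes>\<^bsub>G\<^esub> h) k X) (Gam T g h (Tob T k X)) =
          Cmp C (Gam T g (h \<otimes>\<^bsub>G\<^esub> k) X) (Tar T g (Gam T h k X))) \<and>
     (\<forall>g\<in>carrier G. \<forall>X\<in>Dom_id T (inv\<^bsub>G\<^esub> g).
        inverse_arr C (Unt T (Tob T g X)) (Gam T \<one>\<^bsub>G\<^esub> g X) \<and>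
        inverse_arr C (Tar T g (Unt T X)) (Gam T g \<one>\<^bsub>G\<^esub> X))"

text \<open>Morphism of partial actions (F, tau): T -> T'. F is a semigroupal functor with
structure isomorphisms FJ; tau_g : F T_g => T'_g F on C_{g^-1} (for which F must map
C_{g^-1} into C'_{g^-1}).\<close>

definition pact_morphism ::
  "'g monoid \<Rightarrow> ('o,'m) scat \<Rightarrow> ('p,'n) scat \<Rightarrow> ('g,'o,'m) pact \<Rightarrow> ('g,'p,'n) pact
     \<Rightarrow> ('o \<Rightarrow> 'p) \<Rightarrow> ('m \<Rightarrow> 'n) \<Rightarrow> ('o \<Rightarrow> 'o \<Rightarrow> 'n) \<Rightarrow> ('g \<Rightarrow> 'o \<Rightarrow> 'n) \<Rightarrow> bool" where
  "pact_morphism G C C' T T' Fo Fm FJ \<tau> \<longleftrightarrow>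
     semigroupal_functor_on C (Ob C) C' (Ob C') Fo Fm FJ \<and>
     (\<forall>g\<in>carrier G.
        (\<forall>X\<in>Dom_id T (inv\<^bsub>G\<^esub> g). Fo X \<in> Dom_id T' (inv\<^bsub>G\<^esub> g)) \<and>
        nat_iso_on C (Dom_id T (inv\<^bsub>G\<^esub> g)) C'
          (Fo \<circ> Tob T g) (Fm \<circ> Tar T g) (Tob T' g \<circ> Fo) (Tar T' g \<circ> Fm) (\<tau> g)) \<and>
     (\<forall>g\<in>carrier G. \<forall>h\<in>carrier G.
        \<forall>X\<in>Dom_id T (inv\<^bsub>G\<^esub> h) \<inter> Dom_id T (inv\<^bsub>G\<^esub> (g \<otimes>\<^bsub>G\<^esub> h)).
          Cmp C' (\<tau> (g \<otimes>\<^bsub>G\<^esub> h) X) (Fm (Gam T g h X)) =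
          Cmp C' (Gam T' g h (Fo X)) (Cmp C' (Tar T' g (\<tau> h X)) (\<tau> g (Tob T h X))))"

end

theory Submission
  imports Defs
begin

lemma cat_comp:
  assumes "category C" "f \<in> homs C A B" "g \<in> homs C B D"
  shows "Cmp C g f \<in> homs C A D"
  using assms unfolding category_def homs_def by auto

lemma cat_assoc:
  assumes "category C" "f \<in> homs C A B" "g \<in> homs C B D" "h \<in> homs C D E"
  shows "Cmp C h (Cmp C g f) = Cmp C (Cmp C h g) f"
  using assms unfolding category_def homs_def by auto

lemma cat_idr:
  assumes "category C" "f \<in> homs C A B"
  shows "Cmp C f (Idt C A) = f"
  using assms unfolding category_def homs_def by auto

lemma cat_idl:
  assumes "category C" "f \<in> homs C A B"
  shows "Cmp C (Idt C B) f = f"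
  using assms unfolding category_def homs_def by auto

lemma inv_homs:
  assumes "inverse_arr C f g" "category C"
  shows "f \<in> homs C (Dm C f) (Cd C f)" "g \<in> homs C (Cd C f) (Dm C f)"
    "Cmp C g f = Idt C (Dm C f)" "Cmp C f g = Idt C (Cd C f)"
  using assms unfolding inverse_arr_def homs_def by auto

lemma cancel_right:
  assumes "category C" "inverse_arr C t s" "x \<in> homs C (Cd C t) D" "y \<in> homs C (Cd C t) D"
    "Cmp C x t = Cmp C y t"
  shows "x = y"
proof -
  have s: "s \<in> homs C (Cd C t) (Dm C t)" "Cmp C t s = Idt C (Cd C t)"
    using inv_homs[OF assms(2,1)] by auto
  have t: "t \<in> homs C (Dm C t) (Cd C t)" using inv_homs[OF assms(2,1)] by auto
  have "x = Cmp C x (Cmp C t s)" using s assms cat_idr by metis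
  also have "\<dots> = Cmp C (Cmp C x t) s" using cat_assoc[OF assms(1) s(1) t assms(3)] .
  also have "\<dots> = Cmp C (Cmp C y t) s" using assms(5) by simp
  also have "\<dots> = Cmp C y (Cmp C t s)" using cat_assoc[OF assms(1) s(1) t assms(4)] by simp
  also have "\<dots> = y" using s assms cat_idr by metis
  finally show ?thesis .
qed

lemma homs_arrs_on:
  assumes "category C" "f \<in> homs C A B"
  shows "f \<in> arrs_on C (Ob C)"
  using assms unfolding category_def homs_def arrs_on_def by auto

lemma homs_ob:
  assumes "category C" "f \<in> homs C A B"
  shows "A \<in> Ob C" "B \<in> Ob C"
  using assms unfolding category_def homs_def by auto

lemma functor_homs:
  assumes "functor_on C (Ob C) D B Fo Fm" "category C" "f \<in> homs C X Y"
  shows "Fm f \<in> homs D (Fo X) (Fo Y)"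
  using assms homs_arrs_on[OF assms(2,3)] unfolding functor_on_def homs_def by auto

lemma functor_comp:
  assumes "functor_on C (Ob C) D B Fo Fm" "category C" "f \<in> homs C X Y" "g \<in> homs C Y Z"
  shows "Fm (Cmp C g f) = Cmp D (Fm g) (Fm f)"
  using assms homs_arrs_on[OF assms(2,3)] homs_arrs_on[OF assms(2,4)]
  unfolding functor_on_def homs_def by auto

lemma functor_id:
  assumes "functor_on C (Ob C) D B Fo Fm" "X \<in> Ob C"
  shows "Fm (Idt C X) = Idt D (Fo X)"
  using assms unfolding functor_on_def by auto

theorem proposition3p9:
  fixes G :: "'g monoid"
    and C :: "('o,'m) scat" and C' :: "('p,'n) scat"
    and T :: "('g,'o,'m) pact" and T' :: "('g,'p,'n) pact"
    and Fo :: "'o \<Rightarrow> 'p" and Fm :: "'m \<Rightarrow> 'n" and FJ :: "'o \<Rightarrow> 'o \<Rightarrow> 'n"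
    and \<tau> :: "'g \<Rightarrow> 'o \<Rightarrow> 'n"
  assumes "partial_action G C T"
    and "partial_action G C' T'"
    and "pact_morphism G C C' T T' Fo Fm FJ \<tau>"
    and "X \<in> Ob C"
  shows "Cmp C' (\<tau> \<one>\<^bsub>G\<^esub> X) (Fm (Unt T X)) = Unt T' (Fo X)"
proof -
  define e where "e = \<one>\<^bsub>G\<^esub>"
  have grp: "group G" using assms(1) unfolding partial_action_def by blast
  have e: "e \<in> carrier G" "inv\<^bsub>G\<^esub> e = e" "e \<otimes>\<^bsub>G\<^esub> e = e"
    using grp unfolding e_def by (auto simp: monoid.inv_one monoid.l_one group.is_monoid monoid.one_closed)
  have cC: "category C" using assms(1) unfolding partial_action_def semigroupal_cat_def by blast
  have cC': "category C'" using assms(2) unfolding partial_action_def semigroupal_cat_def by blast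
  have DT: "Dom_id T e = Ob C" using assms(1) unfolding partial_action_def e_def by blast
  have DT': "Dom_id T' e = Ob C'" using assms(2) unfolding partial_action_def e_def by blast
  have Tf: "functor_on C (Ob C) C (Ob C) (Tob T e) (Tar T e)"
    using assms(1) e DT unfolding partial_action_def semigroupal_equiv_on_def
      semigroupal_functor_on_def by metis
  have T'f: "functor_on C' (Ob C') C' (Ob C') (Tob T' e) (Tar T' e)"
    using assms(2) e DT' unfolding partial_action_def semigroupal_equiv_on_def
      semigroupal_functor_on_def by metis
  have T'eq: "equivalence_on C' (Ob C') C' (Ob C') (Tob T' e) (Tar T' e)"
    using assms(2) e DT' unfolding partial_action_def semigroupal_equiv_on_def by metis
  have Ff: "functor_on C (Ob C) C' (Ob C') Fo Fm"
    using assms(3) unfolding pact_morphism_def semigroupal_functor_on_def by blast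
  have unat: "nat_iso_on C (Ob C) C id id (Tob T e) (Tar T e) (Unt T)"
    using assms(1) unfolding partial_action_def e_def by blast
  have unat': "nat_iso_on C' (Ob C') C' id id (Tob T' e) (Tar T' e) (Unt T')"
    using assms(2) unfolding partial_action_def e_def by blast
  have taunat: "nat_iso_on C (Ob C) C'
          (Fo \<circ> Tob T e) (Fm \<circ> Tar T e) (Tob T' e \<circ> Fo) (Tar T' e \<circ> Fm) (\<tau> e)"
    using assms(3) e DT unfolding pact_morphism_def by metis
  have mor: "\<forall>X\<in>Dom_id T (inv\<^bsub>G\<^esub> e) \<inter> Dom_id T (inv\<^bsub>G\<^esub> (e \<otimes>\<^bsub>G\<^esub> e)).
          Cmp C' (\<tau> (e \<otimes>\<^bsub>G\<^esub> e) X) (Fm (Gam T e e X)) =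
          Cmp C' (Gam T' e e (Fo X)) (Cmp C' (Tar T' e (\<tau> e X)) (\<tau> e (Tob T e X)))"
    using assms(3) e unfolding pact_morphism_def by blast
  have invT: "\<forall>X\<in>Dom_id T (inv\<^bsub>G\<^esub> e). inverse_arr C (Tar T e (Unt T X)) (Gam T e e X)"
    using assms(1) e unfolding partial_action_def e_def by blast
  have invT': "\<forall>X\<in>Dom_id T' (inv\<^bsub>G\<^esub> e). inverse_arr C' (Tar T' e (Unt T' X)) (Gam T' e e X)"
    using assms(2) e unfolding partial_action_def e_def by blast
  define TX where "TX = Tob T e X"
  define uX where "uX = Unt T X"
  define Tu where "Tu = Tar T e uX"
  define \<gamma> where "\<gamma> = Gam T e e X"
  define FX where "FX = Fo X"
  define tX where "tX = \<tau> e X"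
  define tTX where "tTX = \<tau> e TX"
  define \<gamma>' where "\<gamma>' = Gam T' e e FX"
  define u' where "u' = Unt T' FX"
  define a where "a = Cmp C' tX (Fm uX)"
  have FXo: "FX \<in> Ob C'" using Ff assms(4) unfolding functor_on_def FX_def by blast
  have huX: "uX \<in> homs C X TX" using unat assms(4)
    unfolding nat_iso_on_def nat_trans_on_def uX_def TX_def by auto
  have TXo: "TX \<in> Ob C" using homs_ob[OF cC huX] by simp
  have hTu: "Tu \<in> homs C TX (Tob T e TX)" using functor_homs[OF Tf cC huX] unfolding Tu_def by (simp add: TX_def)
  have iT: "inverse_arr C Tu \<gamma>" using invT assms(4) unfolding e(2) DT Tu_def \<gamma>_def uX_def by blast
  have h\<gamma>: "\<gamma> \<in> homs C (Tob T e TX) TX" and \<gamma>Tu: "Cmp C \<gamma> Tu = Idt C TX"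
    using inv_homs[OF iT cC] hTu unfolding homs_def by auto
  have hFu: "Fm uX \<in> homs C' FX (Fo TX)" using functor_homs[OF Ff cC huX] FX_def by simp
  have hFTu: "Fm Tu \<in> homs C' (Fo TX) (Fo (Tob T e TX))" using functor_homs[OF Ff cC hTu] .
  have hF\<gamma>: "Fm \<gamma> \<in> homs C' (Fo (Tob T e TX)) (Fo TX)" using functor_homs[OF Ff cC h\<gamma>] .
  have htX: "tX \<in> homs C' (Fo TX) (Tob T' e FX)" and itX: "iso_arr C' tX"
    using taunat assms(4) unfolding nat_iso_on_def nat_trans_on_def tX_def TX_def FX_def by auto
  have htTX: "tTX \<in> homs C' (Fo (Tob T e TX)) (Tob T' e (Fo TX))"
    using taunat TXo unfolding nat_iso_on_def nat_trans_on_def tTX_def by auto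
  have FTXo: "Fo TX \<in> Ob C'" using Ff TXo unfolding functor_on_def by blast
  have hT'tX: "Tar T' e tX \<in> homs C' (Tob T' e (Fo TX)) (Tob T' e (Tob T' e FX))"
    using functor_homs[OF T'f cC' htX] .
  have hu': "u' \<in> homs C' FX (Tob T' e FX)" using unat' FXo
    unfolding nat_iso_on_def nat_trans_on_def u'_def by auto
  have hT'u': "Tar T' e u' \<in> homs C' (Tob T' e FX) (Tob T' e (Tob T' e FX))"
    using functor_homs[OF T'f cC' hu'] .
  have iT': "inverse_arr C' (Tar T' e u') \<gamma>'" using invT' FXo
    unfolding e(2) DT' u'_def \<gamma>'_def by blast
  have h\<gamma>': "\<gamma>' \<in> homs C' (Tob T' e (Tob T' e FX)) (Tob T' e FX)"
    and \<gamma>'T'u': "Cmp C' \<gamma>' (Tar T' e u') = Idt C' (Tob T' e FX)"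
    and T'u'\<gamma>': "Cmp C' (Tar T' e u') \<gamma>' = Idt C' (Tob T' e (Tob T' e FX))"
    using inv_homs[OF iT' cC'] hT'u' unfolding homs_def by auto
  have hT'Fu: "Tar T' e (Fm uX) \<in> homs C' (Tob T' e FX) (Tob T' e (Fo TX))"
    using functor_homs[OF T'f cC' hFu] .
  have ha: "a \<in> homs C' FX (Tob T' e FX)" using cat_comp[OF cC' hFu htX] a_def by simp
  have hT'a: "Tar T' e a \<in> homs C' (Tob T' e FX) (Tob T' e (Tob T' e FX))"
    using functor_homs[OF T'f cC' ha] .
  have T'a: "Tar T' e a = Cmp C' (Tar T' e tX) (Tar T' e (Fm uX))"
    using functor_comp[OF T'f cC' hFu htX] a_def by simp
  have natt: "Cmp C' tTX (Fm Tu) = Cmp C' (Tar T' e (Fm uX)) tX"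
  proof -
    have "uX \<in> arrs_on C (Ob C)" using homs_arrs_on[OF cC huX] .
    moreover have "Dm C uX = X" "Cd C uX = TX" using huX unfolding homs_def by auto
    moreover have "\<forall>f\<in>arrs_on C (Ob C). Cmp C' (\<tau> e (Cd C f)) ((Fm \<circ> Tar T e) f) = Cmp C' ((Tar T' e \<circ> Fm) f) (\<tau> e (Dm C f))"
      using taunat unfolding nat_iso_on_def nat_trans_on_def by blast
    ultimately show ?thesis unfolding tTX_def tX_def Tu_def by auto
  qed
  have morX: "Cmp C' tX (Fm \<gamma>) = Cmp C' \<gamma>' (Cmp C' (Tar T' e tX) tTX)"
    using mor assms(4) unfolding e(3) e(2) DT tX_def \<gamma>_def \<gamma>'_def FX_def tTX_def TX_def by blast
  have "tX = Cmp C' tX (Idt C' (Fo TX))" using cat_idr[OF cC' htX] by simp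
  also have "\<dots> = Cmp C' tX (Fm (Cmp C \<gamma> Tu))" using \<gamma>Tu functor_id[OF Ff TXo] by simp
  also have "\<dots> = Cmp C' tX (Cmp C' (Fm \<gamma>) (Fm Tu))" using functor_comp[OF Ff cC hTu h\<gamma>] by simp
  also have "\<dots> = Cmp C' (Cmp C' tX (Fm \<gamma>)) (Fm Tu)" using cat_assoc[OF cC' hFTu hF\<gamma> htX] .
  also have "\<dots> = Cmp C' (Cmp C' \<gamma>' (Cmp C' (Tar T' e tX) tTX)) (Fm Tu)" using morX by simp
  also have "\<dots> = Cmp C' \<gamma>' (Cmp C' (Cmp C' (Tar T' e tX) tTX) (Fm Tu))"
    using cat_assoc[OF cC' hFTu cat_comp[OF cC' htTX hT'tX] h\<gamma>'] by simp
  also have "\<dots> = Cmp C' \<gamma>' (Cmp C' (Tar T' e tX) (Cmp C' tTX (Fm Tu)))"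
    using cat_assoc[OF cC' hFTu htTX hT'tX] by simp
  also have "\<dots> = Cmp C' \<gamma>' (Cmp C' (Tar T' e tX) (Cmp C' (Tar T' e (Fm uX)) tX))"
    using natt by simp
  also have "\<dots> = Cmp C' \<gamma>' (Cmp C' (Tar T' e a) tX)"
    using cat_assoc[OF cC' htX hT'Fu hT'tX] T'a by simp
  also have "\<dots> = Cmp C' (Cmp C' \<gamma>' (Tar T' e a)) tX"
    using cat_assoc[OF cC' htX hT'a h\<gamma>'] .
  finally have eq1: "tX = Cmp C' (Cmp C' \<gamma>' (Tar T' e a)) tX" .
  obtain s where s: "inverse_arr C' tX s" using itX unfolding iso_arr_def by blast
  have CdtX: "Cd C' tX = Tob T' e FX" using htX unfolding homs_def by simp
  have "Cmp C' (Idt C' (Tob T' e FX)) tX = Cmp C' (Cmp C' \<gamma>' (Tar T' e a)) tX"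
    using eq1 cat_idl[OF cC' htX] by simp
  note eqa = this
  have i1: "Idt C' (Tob T' e FX) \<in> homs C' (Cd C' tX) (Tob T' e FX)"
  proof -
    have "Tob T' e FX \<in> Ob C'" using homs_ob(2)[OF cC' hu'] .
    thus ?thesis using cC' CdtX unfolding category_def by auto
  qed
  have i2: "Cmp C' \<gamma>' (Tar T' e a) \<in> homs C' (Cd C' tX) (Tob T' e FX)"
    using cat_comp[OF cC' hT'a h\<gamma>'] CdtX by simp
  have eq2: "Cmp C' \<gamma>' (Tar T' e a) = Idt C' (Tob T' e FX)"
    using cancel_right[OF cC' s i1 i2 eqa] by simp
  have "Tar T' e a = Cmp C' (Idt C' (Tob T' e (Tob T' e FX))) (Tar T' e a)"
    using cat_idl[OF cC' hT'a] by simp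
  also have "\<dots> = Cmp C' (Cmp C' (Tar T' e u') \<gamma>') (Tar T' e a)" using T'u'\<gamma>' by simp
  also have "\<dots> = Cmp C' (Tar T' e u') (Cmp C' \<gamma>' (Tar T' e a))"
    using cat_assoc[OF cC' hT'a h\<gamma>' hT'u'] by simp
  also have "\<dots> = Tar T' e u'" using eq2 cat_idr[OF cC' hT'u'] by simp
  finally have "Tar T' e a = Tar T' e u'" .
  hence "a = u'" using T'eq FXo ha hu' homs_ob(2)[OF cC' hu'] unfolding equivalence_on_def by blast
  thus ?thesis unfolding a_def u'_def tX_def uX_def FX_def e_def .
qed

end
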